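(* Let $h>0$, $P\ge 0$, $0<\zeta\le 1$, $\sigma_A^2\ge 0$, $\sigma_{\rm cov}^2>0$, and let $N\ge 1$ be an integer. Define, for $\rho\in[0,1]$, $$f(\rho)=\log_2\!\left(1+\frac{(1-\rho)hP}{(1-\rho)\sigma_A^2+\sigma_{\rm cov}^2}\right).$$ Define the dynamic power splitting (DPS) region $$\mathcal{C}^{\rm DPS}(P)=\bigcup_{\boldsymbol\rho=(\rho_1,\dots,\rho_N)\in[0,1]^N}\Big\{(R,Q)\in\mathbb{R}^2:\ Q\le \tfrac1N\sum_{k=1}^N\rho_k\zeta hP,\ \ R\le \tfrac1N\sum_{k=1}^N f(\rho_k)\Big\}$$ and the static power splitting (SPS) region $$\mathcal{C}^{\rm SPS}(P)=\bigcup_{\rho\in[0,1]}\Big\{(R,Q)\in\mathbb{R}^2:\ Q\le \rho\zeta hP,\ \ R\le f(\rho)\Big\}.$$ Then $\mathcal{C}^{\rm DPS}(P)=\mathcal{C}^{\rm SPS}(P)$ for every $P\ge 0$.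
   Context: This models a separated information/energy receiver: in symbol $k$ of a block of $N$ symbols, a fraction $\rho_k$ of the received power $hP$ (channel gain $h$, transmit power $P$) is sent to an energy harvester with conversion efficiency $\zeta$, and the fraction $1-\rho_k$ to an information decoder whose rate is $f(\rho_k)$; $\sigma_A^2$ is antenna noise power and $\sigma_{\rm cov}^2$ is RF-to-baseband conversion noise power. SPS is the special case $\rho_k=\rho$ for all $k$. *)

theory Defs
  imports Complex_Main
begin

definition rate_f :: "real \<Rightarrow> real \<Rightarrow> real \<Rightarrow> real \<Rightarrow> real \<Rightarrow> real" where
  "rate_f h P sA2 scov2 \<rho> =
     log 2 (1 + ((1 - \<rho>) * h * P) / ((1 - \<rho>) * sA2 + scov2))"

definition C_DPS :: "nat \<Rightarrow> real \<Rightarrow> real \<Rightarrow> real \<Rightarrow> real \<Rightarrow> real \<Rightarrow> (real \<times> real) set" where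
  "C_DPS N h \<zeta> sA2 scov2 P =
     (\<Union>\<rho> \<in> {\<rho> :: nat \<Rightarrow> real. \<forall>k<N. 0 \<le> \<rho> k \<and> \<rho> k \<le> 1}.
        {(R, Q). Q \<le> (1 / real N) * (\<Sum>k<N. \<rho> k * \<zeta> * h * P)
               \<and> R \<le> (1 / real N) * (\<Sum>k<N. rate_f h P sA2 scov2 (\<rho> k))})"

definition C_SPS :: "real \<Rightarrow> real \<Rightarrow> real \<Rightarrow> real \<Rightarrow> real \<Rightarrow> (real \<times> real) set" where
  "C_SPS h \<zeta> sA2 scov2 P =
     (\<Union>\<rho> \<in> {0..1}. {(R, Q). Q \<le> \<rho> * \<zeta> * h * P \<and> R \<le> rate_f h P sA2 scov2 \<rho>})"

end

theory Submission
  imports Defs "HOL-Analysis.Analysis"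
begin

lemma F_convex:
  fixes a b c :: real
  assumes b: "b \<ge> 0" and ab: "a \<ge> b" and c: "c > 0"
  shows "convex_on {0..1} (\<lambda>r. ln ((1-r) * b + c) - ln ((1-r) * a + c))"
proof (rule f''_ge0_imp_convex[where f' = "\<lambda>r. - b/((1-r) * b+c) + a/((1-r) * a+c)"
      and f'' = "\<lambda>r. - (b*b)/(((1-r) * b+c)*((1-r) * b+c)) + (a*a)/(((1-r) * a+c)*((1-r) * a+c))"])
  show "convex {0..1::real}" by simp
next
  fix x :: real assume x: "x \<in> {0..1}"
  have v: "(1-x) * b + c > 0" using x b c by (simp add: add_nonneg_pos)
  have u: "(1-x) * a + c > 0" using x b ab c
    by (metis add_nonneg_pos atLeastAtMost_iff diff_ge_0_iff_ge order.trans mult_nonneg_nonneg)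
  show "((\<lambda>r. ln ((1-r) * b + c) - ln ((1-r) * a + c)) has_real_derivative
          - b/((1-x) * b+c) + a/((1-x) * a+c)) (at x)"
    using u v by (auto intro!: derivative_eq_intros simp: field_simps)
  show "((\<lambda>r. - b/((1-r) * b+c) + a/((1-r) * a+c)) has_real_derivative
          - (b*b)/(((1-x) * b+c)*((1-x) * b+c)) + (a*a)/(((1-x) * a+c)*((1-x) * a+c))) (at x)"
    using u v by (auto intro!: derivative_eq_intros simp: field_simps power2_eq_square)
  have "b/((1-x) * b+c) \<le> a/((1-x) * a+c)"
    using u v b ab c by (simp add: divide_simps) (simp add: algebra_simps mult_right_mono)
  moreover have "0 \<le> b/((1-x) * b+c)" using v b by simp
  ultimately have "(b/((1-x) * b+c)) ^ 2 \<le> (a/((1-x) * a+c)) ^ 2"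
    by (simp add: power_mono)
  then show "0 \<le> - (b*b)/(((1-x) * b+c)*((1-x) * b+c)) + (a*a)/(((1-x) * a+c)*((1-x) * a+c))"
    by (simp add: power_divide power2_eq_square)
qed

theorem proposition1:
  fixes h P \<zeta> sA2 scov2 :: real and N :: nat
  assumes "h > 0" and "P \<ge> 0" and "0 < \<zeta>" and "\<zeta> \<le> 1"
    and "sA2 \<ge> 0" and "scov2 > 0" and "N \<ge> 1"
  shows "C_DPS N h \<zeta> sA2 scov2 P = C_SPS h \<zeta> sA2 scov2 P"
proof -
  define F where "F = (\<lambda>r::real. ln ((1-r) * sA2 + scov2) - ln ((1-r)*(sA2 + h*P) + scov2))"
  have cvx: "convex_on {0..1} F" unfolding F_def
    by (rule F_convex) (use assms in auto)
  have rf: "rate_f h P sA2 scov2 r = - F r / ln 2" if "r \<in> {0..1}" for r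
  proof -
    have v: "(1-r) * sA2 + scov2 > 0" using that assms by (simp add: add_nonneg_pos)
    have u: "(1-r)*(sA2+h*P) + scov2 > 0" using that assms
      by (intro add_nonneg_pos mult_nonneg_nonneg) auto
    have "1 + (1 - r) * h * P / ((1 - r) * sA2 + scov2) = ((1-r)*(sA2+h*P) + scov2) / ((1-r) * sA2 + scov2)"
      using v by (simp add: field_simps)
    then show ?thesis unfolding rate_f_def F_def log_def using u v
      by (simp add: ln_div field_simps)
  qed
  have Npos: "real N > 0" using assms by simp
  show ?thesis
  proof
    show "C_DPS N h \<zeta> sA2 scov2 P \<subseteq> C_SPS h \<zeta> sA2 scov2 P"
    proof
      fix x assume "x \<in> C_DPS N h \<zeta> sA2 scov2 P"
      then obtain \<rho> R Q where x: "x = (R,Q)" and rng: "\<forall>k<N. 0 \<le> \<rho> k \<and> \<rho> k \<le> 1"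
        and hQ: "Q \<le> (1 / real N) * (\<Sum>k<N. \<rho> k * \<zeta> * h * P)"
        and hR: "R \<le> (1 / real N) * (\<Sum>k<N. rate_f h P sA2 scov2 (\<rho> k))"
        unfolding C_DPS_def by auto
      define m where "m = (\<Sum>k<N. (1/real N) * \<rho> k)"
      have m0: "0 \<le> m" unfolding m_def using rng by (intro sum_nonneg) auto
      have "m \<le> (\<Sum>k<N. (1/real N) * 1)" unfolding m_def using rng Npos
        by (intro sum_mono) (auto simp: divide_right_mono)
      also have "\<dots> = 1" using Npos by simp
      finally have m1: "m \<le> 1" .
      have "Q \<le> m * \<zeta> * h * P" using hQ unfolding m_def
        by (simp add: sum_distrib_left sum_distrib_right mult.assoc)
      moreover have "F m \<le> (\<Sum>k<N. (1/real N) * F (\<rho> k))"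
        using convex_on_sum[OF _ _ cvx, of "{..<N}" "\<lambda>_. 1/real N" \<rho>] rng Npos assms
        unfolding m_def by (auto simp: lessThan_empty_iff)
      then have FF: "F m \<le> (1/real N) * (\<Sum>k<N. F (\<rho> k))"
        by (simp add: sum_distrib_left)
      have e1: "(\<Sum>k<N. rate_f h P sA2 scov2 (\<rho> k)) = (\<Sum>k<N. - F (\<rho> k) / ln 2)"
        using rf rng by (intro sum.cong) auto
      have e2: "(\<Sum>k<N. - F (\<rho> k) / ln 2) = - (\<Sum>k<N. F (\<rho> k)) / ln 2"
        by (simp add: sum_divide_distrib[symmetric] sum_negf)
      have e3: "(1 / real N) * (\<Sum>k<N. rate_f h P sA2 scov2 (\<rho> k))
          = - ((1/real N) * (\<Sum>k<N. F (\<rho> k))) / ln 2" using e1 e2 by simp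
      have e4: "- ((1/real N) * (\<Sum>k<N. F (\<rho> k))) / ln 2 \<le> - F m / ln 2"
        using divide_right_mono[OF FF, of "ln 2"] by simp
      have e5: "- F m / ln 2 = rate_f h P sA2 scov2 m" using rf m0 m1 by simp
      have "(1 / real N) * (\<Sum>k<N. rate_f h P sA2 scov2 (\<rho> k)) \<le> rate_f h P sA2 scov2 m"
        using e3 e4 e5 by linarith
      ultimately show "x \<in> C_SPS h \<zeta> sA2 scov2 P"
        unfolding C_SPS_def x using hR m0 m1 by auto
    qed
  next
    show "C_SPS h \<zeta> sA2 scov2 P \<subseteq> C_DPS N h \<zeta> sA2 scov2 P"
    proof
      fix x assume "x \<in> C_SPS h \<zeta> sA2 scov2 P"
      then obtain r R Q where x: "x = (R,Q)" and r: "0 \<le> r" "r \<le> 1"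
        and hQ: "Q \<le> r * \<zeta> * h * P" and hR: "R \<le> rate_f h P sA2 scov2 r"
        unfolding C_SPS_def by auto
      show "x \<in> C_DPS N h \<zeta> sA2 scov2 P"
        unfolding C_DPS_def x using r hQ hR Npos
        by (intro UN_I[of "\<lambda>_. r"]) auto
    qed
  qed
qed

end
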